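(* Let $K=1$ (a control arm $0$ and one arm $1$), $J\ge1$, and suppose $\nu_{a,i}=\mathcal N(\mu_{a,i},\sigma_{a,i}^2)$ with known $\sigma_{a,i}>0$, and $\boldsymbol\mu\in\mathcal L$. Let $\Delta_1=\mu_0-\mu_1$. Then: (1) $T^\star_{\mathrm{agnostic}}(\boldsymbol\mu)=\dfrac{2\left(\sqrt{\sum_{i=1}^J\beta_i^2\sigma_{0,i}^2/\alpha_i}+\sqrt{\sum_{i=1}^J\beta_i^2\sigma_{1,i}^2/\alpha_i}\right)^2}{\Delta_1^2}$, attained at $w^\star_{a,i}=\dfrac{\alpha_i\sqrt{\sum_{j}\beta_j^2\sigma_{a,j}^2/\alpha_j}}{\sqrt{\sum_j\beta_j^2\sigma_{0,j}^2/\alpha_j}+\sqrt{\sum_j\beta_j^2\sigma_{1,j}^2/\alpha_j}}$; (2) $T^\star_{\mathrm{prop}}(\boldsymbol\mu)=\dfrac{2\sum_{i=1}^J\frac{\beta_i^2}{\alpha_i}(\sigma_{0,i}+\sigma_{1,i})^2}{\Delta_1^2}$, attained at $w^\star_{a,i}=\dfrac{\alpha_i\sigma_{a,i}}{\sigma_{0,i}+\sigma_{1,i}}$ for all $i\le J$, $a\in\{0,1\}$; (3) $T^\star_{\mathrm{active}}(\boldsymbol\mu)=\dfrac{2\left(\sum_{i=1}^J|\beta_i|(\sigma_{0,i}+\sigma_{1,i})\right)^2}{\Delta_1^2}$, attained at $w^\star_{a,i}=\dfrac{|\beta_i|\sigma_{a,i}}{\sum_{j=1}^J|\beta_j|(\sigma_{0,j}+\sigma_{1,j})}$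 for all $i\le J$, $a\in\{0,1\}$.
   Context: Arms $a\in\{0,1\}$ (arm $0$ is the control), subpopulations $i\in[J]$; means $\boldsymbol\mu=(\mu_{a,i})$. Known $\boldsymbol\beta\in\mathbb R^J$ and known $\boldsymbol\alpha\in\Sigma_J$ with $\alpha_i>0$ ($\Sigma_n$ the probability simplex). Weighted means $\mu_a=\sum_i\beta_i\mu_{a,i}$, $\lambda_a=\sum_i\beta_i\lambda_{a,i}$. For the Gaussian model, $d_{a,i}(x,y)=(x-y)^2/(2\sigma_{a,i}^2)$ is the KL divergence between $\mathcal N(x,\sigma_{a,i}^2)$ and $\mathcal N(y,\sigma_{a,i}^2)$. $\mathcal L$ is the set of $\boldsymbol\mu\in\mathbb R^{2\times J}$ with $\mu_1\ne\mu_0$; $\mathcal S_{\boldsymbol\beta}(\boldsymbol\mu)=\{a\in\{1\}:\mu_a>\mu_0\}$ and $\mathrm{Alt}_{\boldsymbol\beta}(\boldsymbol\mu)=\{\boldsymbol\lambda\in\mathcal L:\mathcal S_{\boldsymbol\beta}(\boldsymbol\lambda)\ne\mathcal S_{\boldsymbol\beta}(\boldsymbol\mu)\}$. For a constraint set $\mathcal C$, $T^\star(\boldsymbol\mu)^{-1}=\sup_{\mathbf w\in\mathcal C}\inf_{\boldsymbol\lambda\in\mathrm{Alt}_{\boldsymbol\beta}(\boldsymbol\mu)}\sum_{a=0}^1\sum_{i=1}^J w_{a,i}\,d_{a,i}(\mu_{a,i},\lambda_{a,i})$, and $T^\star_{\mathrm{active}},T^\star_{\mathrm{prop}},T^\star_{\mathrm{agnostic}}$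 use respectively $\mathcal C_{\mathrm{active}}=\Sigma_{2J}$, $\mathcal C_{\mathrm{prop}}=\{\mathbf w\in\Sigma_{2J}:w_{0,i}+w_{1,i}=\alpha_i\ \forall i\}$, $\mathcal C_{\mathrm{agnostic}}=\{\mathbf w:w_{a,i}=\alpha_iu_a,\ \mathbf u\in\Sigma_2\}$. "Attained at $\mathbf w^\star$" means $\mathbf w^\star$ belongs to the constraint set and achieves the supremum. *)

theory Defs
  imports Complex_Main
begin

text \<open>Arms are 0 (control) and 1; subpopulations are 1..J.
  Mean matrices, weights, variances are functions nat => nat => real,
  indexed as (arm, subpopulation); values outside the index range are irrelevant.\<close>

definition arms :: "nat set" where "arms = {0, 1}"

definition gauss_kl :: "(nat \<Rightarrow> nat \<Rightarrow> real) \<Rightarrow> nat \<Rightarrow> nat \<Rightarrow> real \<Rightarrow> real \<Rightarrow> real" where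
  "gauss_kl \<sigma> a i x y = (x - y)^2 / (2 * (\<sigma> a i)^2)"

definition wmean :: "nat \<Rightarrow> (nat \<Rightarrow> real) \<Rightarrow> (nat \<Rightarrow> nat \<Rightarrow> real) \<Rightarrow> nat \<Rightarrow> real" where
  "wmean J \<beta> m a = (\<Sum>i\<in>{1..J}. \<beta> i * m a i)"

definition LL :: "nat \<Rightarrow> (nat \<Rightarrow> real) \<Rightarrow> (nat \<Rightarrow> nat \<Rightarrow> real) set" where
  "LL J \<beta> = {m. wmean J \<beta> m 1 \<noteq> wmean J \<beta> m 0}"

definition Sset :: "nat \<Rightarrow> (nat \<Rightarrow> real) \<Rightarrow> (nat \<Rightarrow> nat \<Rightarrow> real) \<Rightarrow> nat set" where
  "Sset J \<beta> m = {a\<in>{1}. wmean J \<beta> m a > wmean J \<beta> m 0}"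

definition Alt :: "nat \<Rightarrow> (nat \<Rightarrow> real) \<Rightarrow> (nat \<Rightarrow> nat \<Rightarrow> real) \<Rightarrow> (nat \<Rightarrow> nat \<Rightarrow> real) set" where
  "Alt J \<beta> m = {l \<in> LL J \<beta>. Sset J \<beta> l \<noteq> Sset J \<beta> m}"

definition objective :: "nat \<Rightarrow> (nat \<Rightarrow> real) \<Rightarrow> (nat \<Rightarrow> nat \<Rightarrow> real) \<Rightarrow> (nat \<Rightarrow> nat \<Rightarrow> real)
    \<Rightarrow> (nat \<Rightarrow> nat \<Rightarrow> real) \<Rightarrow> real" where
  "objective J \<beta> \<sigma> m w =
     (INF l\<in>Alt J \<beta> m. \<Sum>a\<in>arms. \<Sum>i\<in>{1..J}. w a i * gauss_kl \<sigma> a i (m a i) (l a i))"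

definition Tstar_inv :: "nat \<Rightarrow> (nat \<Rightarrow> real) \<Rightarrow> (nat \<Rightarrow> nat \<Rightarrow> real) \<Rightarrow> (nat \<Rightarrow> nat \<Rightarrow> real) set
    \<Rightarrow> (nat \<Rightarrow> nat \<Rightarrow> real) \<Rightarrow> real" where
  "Tstar_inv J \<beta> \<sigma> C m = (SUP w\<in>C. objective J \<beta> \<sigma> m w)"

definition Tstar :: "nat \<Rightarrow> (nat \<Rightarrow> real) \<Rightarrow> (nat \<Rightarrow> nat \<Rightarrow> real) \<Rightarrow> (nat \<Rightarrow> nat \<Rightarrow> real) set
    \<Rightarrow> (nat \<Rightarrow> nat \<Rightarrow> real) \<Rightarrow> real" where
  "Tstar J \<beta> \<sigma> C m = inverse (Tstar_inv J \<beta> \<sigma> C m)"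

definition attained :: "nat \<Rightarrow> (nat \<Rightarrow> real) \<Rightarrow> (nat \<Rightarrow> nat \<Rightarrow> real) \<Rightarrow> (nat \<Rightarrow> nat \<Rightarrow> real) set
    \<Rightarrow> (nat \<Rightarrow> nat \<Rightarrow> real) \<Rightarrow> (nat \<Rightarrow> nat \<Rightarrow> real) \<Rightarrow> bool" where
  "attained J \<beta> \<sigma> C m w \<longleftrightarrow> w \<in> C \<and> objective J \<beta> \<sigma> m w = Tstar_inv J \<beta> \<sigma> C m"

definition C_active :: "nat \<Rightarrow> (nat \<Rightarrow> nat \<Rightarrow> real) set" where
  "C_active J = {w. (\<forall>a\<in>arms. \<forall>i\<in>{1..J}. w a i \<ge> 0) \<and> (\<Sum>a\<in>arms. \<Sum>i\<in>{1..J}. w a i) = 1}"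

definition C_prop :: "nat \<Rightarrow> (nat \<Rightarrow> real) \<Rightarrow> (nat \<Rightarrow> nat \<Rightarrow> real) set" where
  "C_prop J \<alpha> = {w \<in> C_active J. \<forall>i\<in>{1..J}. w 0 i + w 1 i = \<alpha> i}"

definition C_agnostic :: "nat \<Rightarrow> (nat \<Rightarrow> real) \<Rightarrow> (nat \<Rightarrow> nat \<Rightarrow> real) set" where
  "C_agnostic J \<alpha> = {w. \<exists>u::nat \<Rightarrow> real. u 0 \<ge> 0 \<and> u 1 \<ge> 0 \<and> u 0 + u 1 = 1 \<and>
       (\<forall>a\<in>arms. \<forall>i\<in>{1..J}. w a i = \<alpha> i * u a)}"

end

theory Submission
  imports Defs
begin


lemma h1: fixes b s S :: real assumes "b \<noteq> 0" "s > 0" "S > 0"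
  shows "b^2 * (s^2 / (\<bar>b\<bar> * s / S)) = S * (\<bar>b\<bar> * s)"
proof -
  have "b^2 = \<bar>b\<bar> * \<bar>b\<bar>" by (simp add: power2_eq_square abs_mult_self_eq)
  then show ?thesis using assms by (simp add: power2_eq_square field_simps)
qed
lemma h2: fixes b s S w :: real assumes "b \<noteq> 0" "s > 0" "S > 0"
  shows "b^2 * (w * s^2 / (\<bar>b\<bar> * s / S)^2) = S^2 * w"
proof -
  have "b^2 = \<bar>b\<bar>^2" by simp
  then show ?thesis using assms by (simp add: power_divide power_mult_distrib field_simps)
qed

lemma h3: fixes a b s0 s1 :: real assumes "a > 0" "s0 > 0" "s1 > 0"
  shows "b^2 * (s0^2 / (a * s0 / (s0 + s1)) + s1^2 / (a * s1 / (s0 + s1))) = b^2 / a * (s0 + s1)^2"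
  using assms by (simp add: power2_eq_square field_simps)
lemma h4: fixes a b s0 s1 w0 w1 :: real assumes "a > 0" "s0 > 0" "s1 > 0"
  shows "b^2 * (w0 * s0^2 / (a * s0 / (s0 + s1))^2 + w1 * s1^2 / (a * s1 / (s0 + s1))^2) = b^2 * (s0 + s1)^2 * (w0 + w1) / a^2"
  using assms by (simp add: power2_eq_square field_simps)
lemma h5: fixes a b s V W :: real assumes "a > 0" "V > 0" "W > 0"
  shows "b^2 * (s^2 / (a * V / W)) = W / V * (b^2 * s^2 / a)"
  using assms by (simp add: power2_eq_square field_simps)
lemma h6: fixes a b s V W u :: real assumes "a > 0" "V > 0" "W > 0"
  shows "b^2 * (a * u * s^2 / (a * V / W)^2) = W^2 * u / V^2 * (b^2 * s^2 / a)"
  using assms by (simp add: power2_eq_square field_simps)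

lemma sum_arms: "(\<Sum>a\<in>arms. f a) = f 0 + f (1::nat)" by (simp add: arms_def)

lemma Sset_eq: "Sset J \<beta> m = (if wmean J \<beta> m 1 > wmean J \<beta> m 0 then {1} else {})"
  by (auto simp: Sset_def)

lemma alt_prod:
  assumes "\<mu> \<in> LL J \<beta>" "l \<in> Alt J \<beta> \<mu>"
  shows "(wmean J \<beta> \<mu> 1 - wmean J \<beta> \<mu> 0) * (wmean J \<beta> l 1 - wmean J \<beta> l 0) < 0"
proof -
  have a: "wmean J \<beta> \<mu> 1 \<noteq> wmean J \<beta> \<mu> 0" using assms(1) by (simp add: LL_def)
  have b: "wmean J \<beta> l 1 \<noteq> wmean J \<beta> l 0" using assms(2) by (simp add: Alt_def LL_def)
  have c: "(wmean J \<beta> l 1 > wmean J \<beta> l 0) \<noteq> (wmean J \<beta> \<mu> 1 > wmean J \<beta> \<mu> 0)"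
    using assms(2) unfolding Alt_def Sset_eq by (auto split: if_splits)
  show ?thesis using a b c
    by (smt (verit) mult_neg_pos mult_pos_neg)
qed

lemma elem:
  fixes w s c x lam :: real
  assumes "s \<noteq> 0" "w \<ge> 0" "w = 0 \<Longrightarrow> c = 0"
  shows "lam * c * x - lam^2 * c^2 * s^2 / (2 * w) \<le> w * x^2 / (2 * s^2)"
proof (cases "w = 0")
  case True then show ?thesis using assms by simp
next
  case False
  then have wp: "w > 0" using assms by simp
  have s2: "s^2 > 0" using assms by simp
  have "(w * x^2 / (2 * s^2) - (lam * c * x - lam^2 * c^2 * s^2 / (2 * w))) * (2*w) = (w * x / s - lam * c * s)^2"
    using wp assms(1) by (simp add: power2_eq_square field_simps)
  then have "0 \<le> (w * x^2 / (2 * s^2) - (lam * c * x - lam^2 * c^2 * s^2 / (2 * w))) * (2*w)"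
    by simp
  then show ?thesis using wp by (simp add: zero_le_mult_iff)
qed

definition Qf :: "nat \<Rightarrow> (nat \<Rightarrow> real) \<Rightarrow> (nat \<Rightarrow> nat \<Rightarrow> real) \<Rightarrow> (nat \<Rightarrow> nat \<Rightarrow> real) \<Rightarrow> real" where
  "Qf J \<beta> \<sigma> w = (\<Sum>i\<in>{1..J}. (\<beta> i)^2 * ((\<sigma> 0 i)^2 / w 0 i + (\<sigma> 1 i)^2 / w 1 i))"

definition Rf :: "nat \<Rightarrow> (nat \<Rightarrow> real) \<Rightarrow> (nat \<Rightarrow> nat \<Rightarrow> real) \<Rightarrow> (nat \<Rightarrow> nat \<Rightarrow> real) \<Rightarrow> (nat \<Rightarrow> nat \<Rightarrow> real) \<Rightarrow> real" where
  "Rf J \<beta> \<sigma> ws w = (\<Sum>i\<in>{1..J}. (\<beta> i)^2 * (w 0 i * (\<sigma> 0 i)^2 / (ws 0 i)^2 + w 1 i * (\<sigma> 1 i)^2 / (ws 1 i)^2))"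

abbreviation cost where
  "cost J \<sigma> \<mu> w l \<equiv> (\<Sum>a\<in>arms. \<Sum>i\<in>{1..J}. w a i * gauss_kl \<sigma> a i (\<mu> a i) (l a i))"

lemma wdiff: "wmean J \<beta> m 1 - wmean J \<beta> m 0 = (\<Sum>i\<in>{1..J}. \<beta> i * (m 1 i - m 0 i))"
  by (simp add: wmean_def sum_subtractf[symmetric] algebra_simps)

lemma LB_cost:
  assumes sig: "\<forall>a\<in>arms. \<forall>i\<in>{1..J}. \<sigma> a i > 0"
    and wnn: "\<forall>a\<in>arms. \<forall>i\<in>{1..J}. w a i \<ge> 0"
    and wz: "\<forall>a\<in>arms. \<forall>i\<in>{1..J}. w a i = 0 \<longrightarrow> \<beta> i = 0"
    and Q: "Qf J \<beta> \<sigma> w > 0"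
    and mu: "\<mu> \<in> LL J \<beta>" and l: "l \<in> Alt J \<beta> \<mu>"
  shows "(wmean J \<beta> \<mu> 0 - wmean J \<beta> \<mu> 1)^2 / (2 * Qf J \<beta> \<sigma> w) \<le> cost J \<sigma> \<mu> w l"
proof -
  define D where "D = wmean J \<beta> \<mu> 1 - wmean J \<beta> \<mu> 0"
  define E where "E = wmean J \<beta> l 1 - wmean J \<beta> l 0"
  define Q where "Q = Qf J \<beta> \<sigma> w"
  define lam where "lam = D / Q"
  have DE: "D * E < 0" using alt_prod[OF mu l] by (simp add: D_def E_def)
  have Qp: "Q > 0" using Q by (simp add: Q_def)
  have el: "lam * (- \<beta> i) * (\<mu> 0 i - l 0 i) - lam^2 * (\<beta> i)^2 * (\<sigma> 0 i)^2 / (2 * w 0 i)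
        + (lam * (\<beta> i) * (\<mu> 1 i - l 1 i) - lam^2 * (\<beta> i)^2 * (\<sigma> 1 i)^2 / (2 * w 1 i))
      \<le> w 0 i * gauss_kl \<sigma> 0 i (\<mu> 0 i) (l 0 i) + w 1 i * gauss_kl \<sigma> 1 i (\<mu> 1 i) (l 1 i)"
    if i: "i \<in> {1..J}" for i
  proof -
    have f: "\<sigma> 0 i > 0" "\<sigma> 1 i > 0" "w 0 i \<ge> 0" "w 1 i \<ge> 0" "w 0 i = 0 \<longrightarrow> \<beta> i = 0" "w 1 i = 0 \<longrightarrow> \<beta> i = 0"
      using sig wnn wz i by (auto simp: arms_def)
    have "lam * (- \<beta> i) * (\<mu> 0 i - l 0 i) - lam^2 * (- \<beta> i)^2 * (\<sigma> 0 i)^2 / (2 * w 0 i)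
        \<le> w 0 i * (\<mu> 0 i - l 0 i)^2 / (2 * (\<sigma> 0 i)^2)"
      apply (rule elem) using f by auto
    moreover have "lam * (\<beta> i) * (\<mu> 1 i - l 1 i) - lam^2 * (\<beta> i)^2 * (\<sigma> 1 i)^2 / (2 * w 1 i)
        \<le> w 1 i * (\<mu> 1 i - l 1 i)^2 / (2 * (\<sigma> 1 i)^2)"
      apply (rule elem) using f by auto
    ultimately show ?thesis by (simp add: gauss_kl_def)
  qed
  have "(\<Sum>i\<in>{1..J}. lam * (- \<beta> i) * (\<mu> 0 i - l 0 i) - lam^2 * (\<beta> i)^2 * (\<sigma> 0 i)^2 / (2 * w 0 i)
        + (lam * (\<beta> i) * (\<mu> 1 i - l 1 i) - lam^2 * (\<beta> i)^2 * (\<sigma> 1 i)^2 / (2 * w 1 i)))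
      \<le> (\<Sum>i\<in>{1..J}. w 0 i * gauss_kl \<sigma> 0 i (\<mu> 0 i) (l 0 i) + w 1 i * gauss_kl \<sigma> 1 i (\<mu> 1 i) (l 1 i))"
    by (rule sum_mono) (rule el)
  also have "\<dots> = cost J \<sigma> \<mu> w l" by (simp add: sum_arms sum.distrib)
  finally have "(\<Sum>i\<in>{1..J}. lam * (- \<beta> i) * (\<mu> 0 i - l 0 i) - lam^2 * (\<beta> i)^2 * (\<sigma> 0 i)^2 / (2 * w 0 i)
        + (lam * (\<beta> i) * (\<mu> 1 i - l 1 i) - lam^2 * (\<beta> i)^2 * (\<sigma> 1 i)^2 / (2 * w 1 i)))
      \<le> cost J \<sigma> \<mu> w l" .
  moreover have "(\<Sum>i\<in>{1..J}. lam * (- \<beta> i) * (\<mu> 0 i - l 0 i) - lam^2 * (\<beta> i)^2 * (\<sigma> 0 i)^2 / (2 * w 0 i)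
        + (lam * (\<beta> i) * (\<mu> 1 i - l 1 i) - lam^2 * (\<beta> i)^2 * (\<sigma> 1 i)^2 / (2 * w 1 i)))
     = lam * (\<Sum>i\<in>{1..J}. \<beta> i * ((\<mu> 1 i - l 1 i) - (\<mu> 0 i - l 0 i))) - lam^2 / 2 * Q"
    by (simp add: Q_def Qf_def sum_distrib_left sum_subtractf[symmetric] sum.distrib[symmetric] algebra_simps add_divide_distrib)
  moreover have "(\<Sum>i\<in>{1..J}. \<beta> i * ((\<mu> 1 i - l 1 i) - (\<mu> 0 i - l 0 i))) = D - E"
    unfolding D_def E_def wdiff sum_subtractf[symmetric] by (rule sum.cong) (simp_all add: algebra_simps)
  moreover have "D^2 / (2*Q) \<le> lam * (D - E) - lam^2 / 2 * Q"
  proof -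
    have "lam * (D - E) - lam^2 / 2 * Q - D^2/(2*Q) = (D^2 - 2 * D * E) / (2*Q) - D^2/(2*Q) + D^2/(2*Q) - D^2/(2*Q)"
      using Qp by (simp add: lam_def power2_eq_square field_simps)
    also have "\<dots> = - (D*E) / Q" using Qp by (simp add: field_simps)
    also have "\<dots> \<ge> 0" using DE Qp by (simp add: divide_nonpos_pos)
    finally show ?thesis by simp
  qed
  moreover have "(wmean J \<beta> \<mu> 0 - wmean J \<beta> \<mu> 1)^2 = D^2" by (simp add: D_def power2_commute)
  ultimately show ?thesis by (simp add: Q_def)
qed

definition ltau :: "(nat \<Rightarrow> real) \<Rightarrow> (nat \<Rightarrow> nat \<Rightarrow> real) \<Rightarrow> (nat \<Rightarrow> nat \<Rightarrow> real) \<Rightarrow> (nat \<Rightarrow> nat \<Rightarrow> real) \<Rightarrow> real \<Rightarrow> nat \<Rightarrow> nat \<Rightarrow> real" where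
  "ltau \<beta> \<sigma> \<mu> ws k a i = \<mu> a i - k * (if a = 0 then - \<beta> i else \<beta> i) * (\<sigma> a i)^2 / ws a i"

lemma ltau_diff:
  shows "wmean J \<beta> (ltau \<beta> \<sigma> \<mu> ws k) 1 - wmean J \<beta> (ltau \<beta> \<sigma> \<mu> ws k) 0
     = (wmean J \<beta> \<mu> 1 - wmean J \<beta> \<mu> 0) - k * Qf J \<beta> \<sigma> ws"
proof -
  have "wmean J \<beta> (ltau \<beta> \<sigma> \<mu> ws k) 1 - wmean J \<beta> (ltau \<beta> \<sigma> \<mu> ws k) 0
     = (\<Sum>i\<in>{1..J}. \<beta> i * (\<mu> 1 i - \<mu> 0 i) - k * ((\<beta> i)^2 * ((\<sigma> 0 i)^2 / ws 0 i + (\<sigma> 1 i)^2 / ws 1 i)))"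
    unfolding wdiff by (rule sum.cong) (simp_all add: ltau_def power2_eq_square algebra_simps add_divide_distrib)
  also have "\<dots> = (wmean J \<beta> \<mu> 1 - wmean J \<beta> \<mu> 0) - k * Qf J \<beta> \<sigma> ws"
    using wdiff[of J \<beta> \<mu>] by (simp add: sum_subtractf sum_distrib_left[symmetric] Qf_def)
  finally show ?thesis .
qed

lemma ltau_alt:
  assumes Q: "Qf J \<beta> \<sigma> ws \<noteq> 0" and mu: "\<mu> \<in> LL J \<beta>" and t: "\<tau> > 1"
  shows "ltau \<beta> \<sigma> \<mu> ws (\<tau> * (wmean J \<beta> \<mu> 1 - wmean J \<beta> \<mu> 0) / Qf J \<beta> \<sigma> ws) \<in> Alt J \<beta> \<mu>"
proof -
  define l where "l = ltau \<beta> \<sigma> \<mu> ws (\<tau> * (wmean J \<beta> \<mu> 1 - wmean J \<beta> \<mu> 0) / Qf J \<beta> \<sigma> ws)"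
  have D: "wmean J \<beta> \<mu> 1 \<noteq> wmean J \<beta> \<mu> 0" using mu by (simp add: LL_def)
  have e: "wmean J \<beta> l 1 - wmean J \<beta> l 0
     = (1 - \<tau>) * (wmean J \<beta> \<mu> 1 - wmean J \<beta> \<mu> 0)" unfolding l_def ltau_diff using Q
    by (simp add: field_simps)
  have "l \<in> LL J \<beta> \<and> Sset J \<beta> l \<noteq> Sset J \<beta> \<mu>"
  proof (cases "wmean J \<beta> \<mu> 1 > wmean J \<beta> \<mu> 0")
    case True
    then have "(1 - \<tau>) * (wmean J \<beta> \<mu> 1 - wmean J \<beta> \<mu> 0) < 0" using t by (simp add: mult_neg_pos)
    then show ?thesis using True e by (auto simp: LL_def Sset_eq)
  next
    case False
    then have "(1 - \<tau>) * (wmean J \<beta> \<mu> 1 - wmean J \<beta> \<mu> 0) > 0" using t D by (simp add: mult_neg_neg)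
    then show ?thesis using False e by (auto simp: LL_def Sset_eq)
  qed
  then show ?thesis by (simp add: Alt_def l_def)
qed

lemma ltau_cost:
  assumes sig: "\<forall>a\<in>arms. \<forall>i\<in>{1..J}. \<sigma> a i > 0"
  shows "cost J \<sigma> \<mu> w (ltau \<beta> \<sigma> \<mu> ws k) = k^2 / 2 * Rf J \<beta> \<sigma> ws w"
proof -
  have "cost J \<sigma> \<mu> w (ltau \<beta> \<sigma> \<mu> ws k) = (\<Sum>i\<in>{1..J}. w 0 i * gauss_kl \<sigma> 0 i (\<mu> 0 i) (ltau \<beta> \<sigma> \<mu> ws k 0 i) + w 1 i * gauss_kl \<sigma> 1 i (\<mu> 1 i) (ltau \<beta> \<sigma> \<mu> ws k 1 i))"
    by (simp add: sum_arms sum.distrib)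
  also have "\<dots> = (\<Sum>i\<in>{1..J}. k^2 / 2 * ((\<beta> i)^2 * (w 0 i * (\<sigma> 0 i)^2 / (ws 0 i)^2 + w 1 i * (\<sigma> 1 i)^2 / (ws 1 i)^2)))"
  proof (rule sum.cong)
    fix i assume i: "i \<in> {1..J}"
    have f: "\<sigma> 0 i > 0" "\<sigma> 1 i > 0" using sig i by (auto simp: arms_def)
    show "w 0 i * gauss_kl \<sigma> 0 i (\<mu> 0 i) (ltau \<beta> \<sigma> \<mu> ws k 0 i) + w 1 i * gauss_kl \<sigma> 1 i (\<mu> 1 i) (ltau \<beta> \<sigma> \<mu> ws k 1 i)
      = k^2 / 2 * ((\<beta> i)^2 * (w 0 i * (\<sigma> 0 i)^2 / (ws 0 i)^2 + w 1 i * (\<sigma> 1 i)^2 / (ws 1 i)^2))"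
      using f by (simp add: gauss_kl_def ltau_def power2_eq_square field_simps)
  qed simp
  also have "\<dots> = k^2 / 2 * Rf J \<beta> \<sigma> ws w"
    by (simp add: Rf_def sum_distrib_left)
  finally show ?thesis .
qed

lemma tau_lim:
  fixes a b :: real
  assumes h: "\<And>\<tau>. \<tau> > 1 \<Longrightarrow> a \<le> \<tau>^2 * b" and b: "b \<ge> 0"
  shows "a \<le> b"
proof (rule ccontr)
  assume "\<not> a \<le> b"
  then have ab: "a > b" by simp
  show False
  proof (cases "b = 0")
    case True then show False using h[of 2] ab by simp
  next
    case False
    then have bp: "b > 0" using b by simp
    define e where "e = min 1 ((a - b) / (6 * b))"
    have e0: "e > 0" using ab bp by (simp add: e_def)
    have e1: "e \<le> 1" by (simp add: e_def)
    have e2: "e * (6 * b) \<le> a - b" using bp by (simp add: e_def min_def field_simps)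
    have "(1 + e)^2 * b = b + e * (2 + e) * b" by (simp add: power2_eq_square algebra_simps)
    also have "\<dots> \<le> b + e * 3 * b" using e0 e1 bp by (simp add: mult_right_mono)
    also have "\<dots> < a" using e2 e0 bp ab by simp
    finally show False using h[of "1 + e"] e0 by simp
  qed
qed

lemma cost_nn:
  assumes sig: "\<forall>a\<in>arms. \<forall>i\<in>{1..J}. \<sigma> a i > 0"
    and wnn: "\<forall>a\<in>arms. \<forall>i\<in>{1..J}. w a i \<ge> 0"
  shows "cost J \<sigma> \<mu> w l \<ge> 0"
  using wnn by (intro sum_nonneg) (auto simp: gauss_kl_def)

lemma UB_obj:
  assumes sig: "\<forall>a\<in>arms. \<forall>i\<in>{1..J}. \<sigma> a i > 0"
    and wnn: "\<forall>a\<in>arms. \<forall>i\<in>{1..J}. w a i \<ge> 0"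
    and Qp: "Qf J \<beta> \<sigma> ws > 0" and R: "Rf J \<beta> \<sigma> ws w \<le> Qf J \<beta> \<sigma> ws"
    and mu: "\<mu> \<in> LL J \<beta>"
  shows "objective J \<beta> \<sigma> \<mu> w \<le> (wmean J \<beta> \<mu> 0 - wmean J \<beta> \<mu> 1)^2 / (2 * Qf J \<beta> \<sigma> ws)"
proof -
  define D where "D = wmean J \<beta> \<mu> 1 - wmean J \<beta> \<mu> 0"
  define Q where "Q = Qf J \<beta> \<sigma> ws"
  have Q0: "Q > 0" using Qp by (simp add: Q_def)
  have bdd: "bdd_below ((\<lambda>l. cost J \<sigma> \<mu> w l) ` Alt J \<beta> \<mu>)"
    by (rule bdd_belowI[of _ 0]) (use cost_nn[OF sig wnn] in auto)
  have h: "objective J \<beta> \<sigma> \<mu> w \<le> \<tau>^2 * (D^2 / (2 * Q))" if t: "\<tau> > 1" for \<tau>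
  proof -
    have mem: "ltau \<beta> \<sigma> \<mu> ws (\<tau> * D / Q) \<in> Alt J \<beta> \<mu>"
      using ltau_alt[OF _ mu t, of \<sigma> ws] Q0 by (simp add: D_def Q_def)
    have "objective J \<beta> \<sigma> \<mu> w \<le> cost J \<sigma> \<mu> w (ltau \<beta> \<sigma> \<mu> ws (\<tau> * D / Q))"
      unfolding objective_def by (rule cINF_lower[OF bdd mem])
    also have "\<dots> = (\<tau> * D / Q)^2 / 2 * Rf J \<beta> \<sigma> ws w" by (rule ltau_cost[OF sig])
    also have "\<dots> \<le> (\<tau> * D / Q)^2 / 2 * Q" using R by (simp add: Q_def mult_left_mono)
    also have "\<dots> = \<tau>^2 * (D^2 / (2 * Q))" using Q0 by (simp add: power2_eq_square field_simps)
    finally show ?thesis .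
  qed
  have "objective J \<beta> \<sigma> \<mu> w \<le> D^2 / (2 * Q)"
  proof (rule tau_lim[OF h])
    show "0 \<le> D^2 / (2 * Q)" using Q0 by (intro divide_nonneg_nonneg) auto
  qed
  then show ?thesis by (simp add: D_def Q_def power2_commute)
qed

lemma LB_obj:
  assumes sig: "\<forall>a\<in>arms. \<forall>i\<in>{1..J}. \<sigma> a i > 0"
    and wnn: "\<forall>a\<in>arms. \<forall>i\<in>{1..J}. w a i \<ge> 0"
    and wz: "\<forall>a\<in>arms. \<forall>i\<in>{1..J}. w a i = 0 \<longrightarrow> \<beta> i = 0"
    and Q: "Qf J \<beta> \<sigma> w > 0"
    and mu: "\<mu> \<in> LL J \<beta>"
  shows "(wmean J \<beta> \<mu> 0 - wmean J \<beta> \<mu> 1)^2 / (2 * Qf J \<beta> \<sigma> w) \<le> objective J \<beta> \<sigma> \<mu> w"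
proof -
  have "ltau \<beta> \<sigma> \<mu> w (2 * (wmean J \<beta> \<mu> 1 - wmean J \<beta> \<mu> 0) / Qf J \<beta> \<sigma> w) \<in> Alt J \<beta> \<mu>"
    using ltau_alt[OF _ mu, of \<sigma> w 2] Q by simp
  then have ne: "Alt J \<beta> \<mu> \<noteq> {}" by blast
  show ?thesis unfolding objective_def
    by (rule cINF_greatest[OF ne]) (rule LB_cost[OF sig wnn wz Q mu])
qed

lemma main_gen:
  assumes sig: "\<forall>a\<in>arms. \<forall>i\<in>{1..J}. \<sigma> a i > 0"
    and mu: "\<mu> \<in> LL J \<beta>"
    and wsC: "ws \<in> C"
    and wsnn: "\<forall>a\<in>arms. \<forall>i\<in>{1..J}. ws a i \<ge> 0"
    and wsz: "\<forall>a\<in>arms. \<forall>i\<in>{1..J}. ws a i = 0 \<longrightarrow> \<beta> i = 0"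
    and QQ: "Qf J \<beta> \<sigma> ws = Q" and Qp: "Q > 0"
    and allC: "\<And>w. w \<in> C \<Longrightarrow> (\<forall>a\<in>arms. \<forall>i\<in>{1..J}. w a i \<ge> 0) \<and> Rf J \<beta> \<sigma> ws w \<le> Q"
  shows "Tstar J \<beta> \<sigma> C \<mu> = 2 * Q / (wmean J \<beta> \<mu> 0 - wmean J \<beta> \<mu> 1)^2
    \<and> attained J \<beta> \<sigma> C \<mu> ws"
proof -
  define v where "v = (wmean J \<beta> \<mu> 0 - wmean J \<beta> \<mu> 1)^2 / (2 * Q)"
  have ub: "objective J \<beta> \<sigma> \<mu> w \<le> v" if "w \<in> C" for w
  proof -
    have w1: "\<forall>a\<in>arms. \<forall>i\<in>{1..J}. w a i \<ge> 0" and w2: "Rf J \<beta> \<sigma> ws w \<le> Qf J \<beta> \<sigma> ws"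
      using allC[OF that] QQ by auto
    show ?thesis using UB_obj[OF sig w1 _ w2 mu] QQ Qp by (simp add: v_def)
  qed
  have lb: "v \<le> objective J \<beta> \<sigma> \<mu> ws"
    using LB_obj[OF sig wsnn wsz _ mu] QQ Qp by (simp add: v_def)
  have ows: "objective J \<beta> \<sigma> \<mu> ws = v" using ub[OF wsC] lb by simp
  have bdd: "bdd_above ((\<lambda>w. objective J \<beta> \<sigma> \<mu> w) ` C)"
    by (rule bdd_aboveI[of _ v]) (use ub in auto)
  have ne: "C \<noteq> {}" using wsC by blast
  have ts: "Tstar_inv J \<beta> \<sigma> C \<mu> = v"
  proof (rule antisym)
    show "Tstar_inv J \<beta> \<sigma> C \<mu> \<le> v" unfolding Tstar_inv_def
      by (rule cSUP_least[OF ne]) (rule ub)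
    show "v \<le> Tstar_inv J \<beta> \<sigma> C \<mu>" unfolding Tstar_inv_def
      using cSUP_upper[OF wsC bdd] ows by simp
  qed
  show ?thesis
    using ts ows by (simp add: Tstar_def attained_def wsC v_def inverse_eq_divide)
qed


theorem proposition2:
  fixes J :: nat and \<alpha> \<beta> :: "nat \<Rightarrow> real" and \<sigma> \<mu> :: "nat \<Rightarrow> nat \<Rightarrow> real"
  assumes J: "J \<ge> 1"
    and alpha_pos: "\<forall>i\<in>{1..J}. \<alpha> i > 0"
    and alpha_sum: "(\<Sum>i\<in>{1..J}. \<alpha> i) = 1"
    and sigma_pos: "\<forall>a\<in>arms. \<forall>i\<in>{1..J}. \<sigma> a i > 0"
    and mu_L: "\<mu> \<in> LL J \<beta>"
  defines "\<Delta> \<equiv> wmean J \<beta> \<mu> 0 - wmean J \<beta> \<mu> 1"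
    and "V \<equiv> (\<lambda>a. sqrt (\<Sum>j\<in>{1..J}. (\<beta> j)^2 * (\<sigma> a j)^2 / \<alpha> j))"
    and "S \<equiv> (\<Sum>j\<in>{1..J}. \<bar>\<beta> j\<bar> * (\<sigma> 0 j + \<sigma> 1 j))"
  shows
    "Tstar J \<beta> \<sigma> (C_agnostic J \<alpha>) \<mu> = 2 * (V 0 + V 1)^2 / \<Delta>^2
     \<and> attained J \<beta> \<sigma> (C_agnostic J \<alpha>) \<mu> (\<lambda>a i. \<alpha> i * V a / (V 0 + V 1))
     \<and> Tstar J \<beta> \<sigma> (C_prop J \<alpha>) \<mu>
         = 2 * (\<Sum>i\<in>{1..J}. (\<beta> i)^2 / \<alpha> i * (\<sigma> 0 i + \<sigma> 1 i)^2) / \<Delta>^2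
     \<and> attained J \<beta> \<sigma> (C_prop J \<alpha>) \<mu> (\<lambda>a i. \<alpha> i * \<sigma> a i / (\<sigma> 0 i + \<sigma> 1 i))
     \<and> Tstar J \<beta> \<sigma> (C_active J) \<mu> = 2 * S^2 / \<Delta>^2
     \<and> attained J \<beta> \<sigma> (C_active J) \<mu> (\<lambda>a i. \<bar>\<beta> i\<bar> * \<sigma> a i / S)"
  proof -
  have sig: "\<forall>a\<in>arms. \<forall>i\<in>{1..J}. \<sigma> a i > 0" by (rule sigma_pos)
  have s0: "\<And>i. i \<in> {1..J} \<Longrightarrow> \<sigma> 0 i > 0" and s1: "\<And>i. i \<in> {1..J} \<Longrightarrow> \<sigma> 1 i > 0"
    using sigma_pos by (auto simp: arms_def)
  have sa: "\<And>a i. a \<in> arms \<Longrightarrow> i \<in> {1..J} \<Longrightarrow> \<sigma> a i > 0" using sigma_pos by auto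
  have ap: "\<And>i. i \<in> {1..J} \<Longrightarrow> \<alpha> i > 0" using alpha_pos by auto
  obtain i0 where i0: "i0 \<in> {1..J}" "\<beta> i0 \<noteq> 0"
  proof (rule ccontr)
    assume "\<not> thesis"
    then have "\<forall>i\<in>{1..J}. \<beta> i = 0" using that by blast
    then have "wmean J \<beta> \<mu> 1 = wmean J \<beta> \<mu> 0" by (simp add: wmean_def)
    then show False using mu_L by (simp add: LL_def)
  qed
  have Dsq: "\<Delta>^2 = (wmean J \<beta> \<mu> 0 - wmean J \<beta> \<mu> 1)^2" by (simp add: \<Delta>_def)

  have Spos: "S > 0"
  proof -
    have "\<bar>\<beta> i0\<bar> * (\<sigma> 0 i0 + \<sigma> 1 i0) \<le> S" unfolding S_def
    proof (rule member_le_sum[OF i0(1)])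
      fix x assume "x \<in> {1..J} - {i0}"
      then have "\<sigma> 0 x > 0" "\<sigma> 1 x > 0" using s0 s1 by auto
      then show "0 \<le> \<bar>\<beta> x\<bar> * (\<sigma> 0 x + \<sigma> 1 x)" by simp
    qed simp
    moreover have "\<bar>\<beta> i0\<bar> * (\<sigma> 0 i0 + \<sigma> 1 i0) > 0" using i0 s0 s1 by (simp add: add_pos_pos)
    ultimately show ?thesis by linarith
  qed
  have active: "Tstar J \<beta> \<sigma> (C_active J) \<mu> = 2 * S^2 / \<Delta>^2
     \<and> attained J \<beta> \<sigma> (C_active J) \<mu> (\<lambda>a i. \<bar>\<beta> i\<bar> * \<sigma> a i / S)"
  proof -
    define ws where "ws = (\<lambda>a i. \<bar>\<beta> i\<bar> * \<sigma> a i / S)"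
    have wsnn: "\<forall>a\<in>arms. \<forall>i\<in>{1..J}. ws a i \<ge> 0"
    proof (intro ballI)
      fix a i assume "a \<in> arms" "i \<in> {1..J}"
      then have "\<sigma> a i > 0" using sig by auto
      then show "ws a i \<ge> 0" using Spos by (simp add: ws_def)
    qed
    have wsz: "\<forall>a\<in>arms. \<forall>i\<in>{1..J}. ws a i = 0 \<longrightarrow> \<beta> i = 0"
    proof (intro ballI impI)
      fix a i assume "a \<in> arms" "i \<in> {1..J}" "ws a i = 0"
      then show "\<beta> i = 0" using sa[of a i] Spos by (simp add: ws_def)
    qed
    have wsC: "ws \<in> C_active J"
    proof -
      have "(\<Sum>a\<in>arms. \<Sum>i\<in>{1..J}. ws a i) = (\<Sum>i\<in>{1..J}. \<bar>\<beta> i\<bar> * (\<sigma> 0 i + \<sigma> 1 i)) / S"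
        by (simp add: sum_arms ws_def sum_divide_distrib[symmetric] sum.distrib[symmetric] algebra_simps add_divide_distrib)
      also have "\<dots> = 1" using Spos unfolding S_def by simp
      finally show ?thesis using wsnn by (simp add: C_active_def)
    qed
    have QQ: "Qf J \<beta> \<sigma> ws = S^2"
    proof -
      have "Qf J \<beta> \<sigma> ws = (\<Sum>i\<in>{1..J}. S * (\<bar>\<beta> i\<bar> * (\<sigma> 0 i + \<sigma> 1 i)))"
        unfolding Qf_def
      proof (rule sum.cong)
        fix i assume i: "i \<in> {1..J}"
        show "(\<beta> i)^2 * ((\<sigma> 0 i)^2 / ws 0 i + (\<sigma> 1 i)^2 / ws 1 i) = S * (\<bar>\<beta> i\<bar> * (\<sigma> 0 i + \<sigma> 1 i))"
        proof (cases "\<beta> i = 0")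
          case False
          then show ?thesis using s0[OF i] s1[OF i] Spos h1[of "\<beta> i" "\<sigma> 0 i" S] h1[of "\<beta> i" "\<sigma> 1 i" S]
            by (simp add: ws_def distrib_left)
        qed (simp add: ws_def)
      qed simp
      also have "\<dots> = S^2" by (simp add: sum_distrib_left[symmetric] S_def power2_eq_square)
      finally show ?thesis .
    qed
    have allC: "(\<forall>a\<in>arms. \<forall>i\<in>{1..J}. w a i \<ge> 0) \<and> Rf J \<beta> \<sigma> ws w \<le> S^2" if w: "w \<in> C_active J" for w
    proof -
      have wnn: "\<forall>a\<in>arms. \<forall>i\<in>{1..J}. w a i \<ge> 0" and ws1: "(\<Sum>a\<in>arms. \<Sum>i\<in>{1..J}. w a i) = 1"
        using w by (auto simp: C_active_def)
      have "Rf J \<beta> \<sigma> ws w \<le> (\<Sum>i\<in>{1..J}. S^2 * (w 0 i + w 1 i))"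
        unfolding Rf_def
      proof (rule sum_mono)
        fix i assume i: "i \<in> {1..J}"
        have w0: "w 0 i \<ge> 0" "w 1 i \<ge> 0" using wnn i by (auto simp: arms_def)
        show "(\<beta> i)^2 * (w 0 i * (\<sigma> 0 i)^2 / (ws 0 i)^2 + w 1 i * (\<sigma> 1 i)^2 / (ws 1 i)^2) \<le> S^2 * (w 0 i + w 1 i)"
        proof (cases "\<beta> i = 0")
          case False
          then show ?thesis using s0[OF i] s1[OF i] Spos h2[of "\<beta> i" "\<sigma> 0 i" S "w 0 i"] h2[of "\<beta> i" "\<sigma> 1 i" S "w 1 i"]
            by (simp add: ws_def distrib_left)
        next
          case True then show ?thesis using w0 by simp
        qed
      qed
      also have "\<dots> = S^2" using ws1 by (simp add: sum_distrib_left[symmetric] sum_arms sum.distrib)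
      finally show ?thesis using wnn by simp
    qed
    have "Tstar J \<beta> \<sigma> (C_active J) \<mu> = 2 * S^2 / (wmean J \<beta> \<mu> 0 - wmean J \<beta> \<mu> 1)^2
      \<and> attained J \<beta> \<sigma> (C_active J) \<mu> ws"
      by (rule main_gen[OF sig mu_L wsC wsnn wsz QQ _ allC]) (use Spos in simp_all)
    then show ?thesis by (simp add: Dsq ws_def)
  qed

  define P where "P = (\<Sum>i\<in>{1..J}. (\<beta> i)^2 / \<alpha> i * (\<sigma> 0 i + \<sigma> 1 i)^2)"
  have Ppos: "P > 0"
  proof -
    have "(\<beta> i0)^2 / \<alpha> i0 * (\<sigma> 0 i0 + \<sigma> 1 i0)^2 \<le> P" unfolding P_def
    proof (rule member_le_sum[OF i0(1)])
      fix x assume "x \<in> {1..J} - {i0}"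
      then have "\<alpha> x > 0" using ap by auto
      then show "0 \<le> (\<beta> x)^2 / \<alpha> x * (\<sigma> 0 x + \<sigma> 1 x)^2" by simp
    qed simp
    moreover have "(\<beta> i0)^2 / \<alpha> i0 * (\<sigma> 0 i0 + \<sigma> 1 i0)^2 > 0"
      using i0 s0[OF i0(1)] s1[OF i0(1)] ap[OF i0(1)] by simp
    ultimately show ?thesis by linarith
  qed
  have propc: "Tstar J \<beta> \<sigma> (C_prop J \<alpha>) \<mu> = 2 * P / \<Delta>^2
     \<and> attained J \<beta> \<sigma> (C_prop J \<alpha>) \<mu> (\<lambda>a i. \<alpha> i * \<sigma> a i / (\<sigma> 0 i + \<sigma> 1 i))"
  proof -
    define ws where "ws = (\<lambda>a i. \<alpha> i * \<sigma> a i / (\<sigma> 0 i + \<sigma> 1 i))"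
    have wsnn: "\<forall>a\<in>arms. \<forall>i\<in>{1..J}. ws a i \<ge> 0"
    proof (intro ballI)
      fix a i assume "a \<in> arms" "i \<in> {1..J}"
      then have "\<sigma> a i > 0" "\<sigma> 0 i > 0" "\<sigma> 1 i > 0" "\<alpha> i > 0" using sa s0 s1 ap by auto
      then show "ws a i \<ge> 0" by (simp add: ws_def)
    qed
    have wsz: "\<forall>a\<in>arms. \<forall>i\<in>{1..J}. ws a i = 0 \<longrightarrow> \<beta> i = 0"
    proof (intro ballI impI)
      fix a i assume "a \<in> arms" "i \<in> {1..J}" "ws a i = 0"
      moreover then have "\<sigma> a i > 0" "\<sigma> 0 i > 0" "\<sigma> 1 i > 0" "\<alpha> i > 0" using sa s0 s1 ap by auto
      ultimately show "\<beta> i = 0" by (simp add: ws_def)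
    qed
    have wsum: "ws 0 i + ws 1 i = \<alpha> i" if i: "i \<in> {1..J}" for i
      using s0[OF i] s1[OF i] by (simp add: ws_def add_divide_distrib[symmetric] distrib_left[symmetric])
    have wsC: "ws \<in> C_prop J \<alpha>"
    proof -
      have "(\<Sum>a\<in>arms. \<Sum>i\<in>{1..J}. ws a i) = (\<Sum>i\<in>{1..J}. ws 0 i + ws 1 i)"
        by (simp add: sum_arms sum.distrib)
      also have "\<dots> = (\<Sum>i\<in>{1..J}. \<alpha> i)" by (rule sum.cong) (use wsum in auto)
      finally show ?thesis using wsnn wsum alpha_sum by (simp add: C_prop_def C_active_def)
    qed
    have QQ: "Qf J \<beta> \<sigma> ws = P" unfolding Qf_def P_def
    proof (rule sum.cong)
      fix i assume i: "i \<in> {1..J}"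
      show "(\<beta> i)^2 * ((\<sigma> 0 i)^2 / ws 0 i + (\<sigma> 1 i)^2 / ws 1 i) = (\<beta> i)^2 / \<alpha> i * (\<sigma> 0 i + \<sigma> 1 i)^2"
        unfolding ws_def by (rule h3) (use s0[OF i] s1[OF i] ap[OF i] in \<open>simp_all add: One_nat_def\<close>)
    qed simp
    have allC: "(\<forall>a\<in>arms. \<forall>i\<in>{1..J}. w a i \<ge> 0) \<and> Rf J \<beta> \<sigma> ws w \<le> P" if w: "w \<in> C_prop J \<alpha>" for w
    proof -
      have wnn: "\<forall>a\<in>arms. \<forall>i\<in>{1..J}. w a i \<ge> 0" and wa: "\<forall>i\<in>{1..J}. w 0 i + w 1 i = \<alpha> i"
        using w by (auto simp: C_prop_def C_active_def)
      have "Rf J \<beta> \<sigma> ws w = P" unfolding Rf_def P_def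
      proof (rule sum.cong)
        fix i assume i: "i \<in> {1..J}"
        have "(\<beta> i)^2 * (w 0 i * (\<sigma> 0 i)^2 / (ws 0 i)^2 + w 1 i * (\<sigma> 1 i)^2 / (ws 1 i)^2)
           = (\<beta> i)^2 * (\<sigma> 0 i + \<sigma> 1 i)^2 * (w 0 i + w 1 i) / (\<alpha> i)^2"
          unfolding ws_def by (rule h4) (use s0[OF i] s1[OF i] ap[OF i] in \<open>simp_all add: One_nat_def\<close>)
        also have "\<dots> = (\<beta> i)^2 / \<alpha> i * (\<sigma> 0 i + \<sigma> 1 i)^2"
          using wa i ap[OF i] by (simp add: power2_eq_square)
        finally show "(\<beta> i)^2 * (w 0 i * (\<sigma> 0 i)^2 / (ws 0 i)^2 + w 1 i * (\<sigma> 1 i)^2 / (ws 1 i)^2)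
           = (\<beta> i)^2 / \<alpha> i * (\<sigma> 0 i + \<sigma> 1 i)^2" .
      qed simp
      then show ?thesis using wnn by simp
    qed
    have "Tstar J \<beta> \<sigma> (C_prop J \<alpha>) \<mu> = 2 * P / (wmean J \<beta> \<mu> 0 - wmean J \<beta> \<mu> 1)^2
      \<and> attained J \<beta> \<sigma> (C_prop J \<alpha>) \<mu> ws"
      by (rule main_gen[OF sig mu_L wsC wsnn wsz QQ Ppos allC])
    then show ?thesis by (simp add: Dsq ws_def)
  qed

  define A where "A = (\<lambda>a. \<Sum>j\<in>{1..J}. (\<beta> j)^2 * (\<sigma> a j)^2 / \<alpha> j)"
  have VA: "V = (\<lambda>a. sqrt (A a))" by (simp add: V_def A_def)
  have Apos: "A a > 0" if a: "a \<in> arms" for a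
  proof -
    have "(\<beta> i0)^2 * (\<sigma> a i0)^2 / \<alpha> i0 \<le> A a" unfolding A_def
    proof (rule member_le_sum[OF i0(1)])
      fix x assume "x \<in> {1..J} - {i0}"
      then have "\<alpha> x > 0" using ap by auto
      then show "0 \<le> (\<beta> x)^2 * (\<sigma> a x)^2 / \<alpha> x" by simp
    qed simp
    moreover have "(\<beta> i0)^2 * (\<sigma> a i0)^2 / \<alpha> i0 > 0"
      using i0 sa[OF a i0(1)] ap[OF i0(1)] by simp
    ultimately show ?thesis by linarith
  qed
  have A0: "A 0 > 0" and A1: "A 1 > 0" using Apos by (auto simp: arms_def)
  have V0: "V 0 > 0" "(V 0)^2 = A 0" using A0 by (simp_all add: VA)
  have V1: "V 1 > 0" "(V 1)^2 = A 1" using A1 by (simp_all add: VA)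
  define W where "W = V 0 + V 1"
  have Wp: "W > 0" using V0 V1 by (simp add: W_def)
  have agn: "Tstar J \<beta> \<sigma> (C_agnostic J \<alpha>) \<mu> = 2 * W^2 / \<Delta>^2
     \<and> attained J \<beta> \<sigma> (C_agnostic J \<alpha>) \<mu> (\<lambda>a i. \<alpha> i * V a / W)"
  proof -
    define ws where "ws = (\<lambda>a i. \<alpha> i * V a / W)"
    have Vp: "V a > 0" if "a \<in> arms" for a using that V0 V1 by (auto simp: arms_def)
    have wsp: "ws a i > 0" if "a \<in> arms" "i \<in> {1..J}" for a i
      using Vp[OF that(1)] ap[OF that(2)] Wp by (simp add: ws_def)
    have wsnn: "\<forall>a\<in>arms. \<forall>i\<in>{1..J}. ws a i \<ge> 0" using wsp by (auto intro: less_imp_le)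
    have wsz: "\<forall>a\<in>arms. \<forall>i\<in>{1..J}. ws a i = 0 \<longrightarrow> \<beta> i = 0" using wsp by force
    have wsC: "ws \<in> C_agnostic J \<alpha>" unfolding C_agnostic_def
    proof (intro CollectI exI[of _ "\<lambda>a. V a / W"] conjI)
      show "0 \<le> V 0 / W" "0 \<le> V 1 / W" using V0 V1 Wp by simp_all
      show "V 0 / W + V 1 / W = 1" using Wp by (simp add: W_def add_divide_distrib[symmetric])
      show "\<forall>a\<in>arms. \<forall>i\<in>{1..J}. ws a i = \<alpha> i * (V a / W)" by (simp add: ws_def)
    qed
    have QQ: "Qf J \<beta> \<sigma> ws = W^2"
    proof -
      have "Qf J \<beta> \<sigma> ws = (\<Sum>i\<in>{1..J}. W / V 0 * ((\<beta> i)^2 * (\<sigma> 0 i)^2 / \<alpha> i) + W / V 1 * ((\<beta> i)^2 * (\<sigma> 1 i)^2 / \<alpha> i))"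
        unfolding Qf_def
      proof (rule sum.cong)
        fix i assume i: "i \<in> {1..J}"
        show "(\<beta> i)^2 * ((\<sigma> 0 i)^2 / ws 0 i + (\<sigma> 1 i)^2 / ws 1 i) = W / V 0 * ((\<beta> i)^2 * (\<sigma> 0 i)^2 / \<alpha> i) + W / V 1 * ((\<beta> i)^2 * (\<sigma> 1 i)^2 / \<alpha> i)"
          unfolding distrib_left ws_def
          using h5[of "\<alpha> i" "V 0" W "\<beta> i" "\<sigma> 0 i"] h5[of "\<alpha> i" "V 1" W "\<beta> i" "\<sigma> 1 i"] ap[OF i] V0 V1 Wp
          by simp
      qed simp
      also have "\<dots> = W / V 0 * A 0 + W / V 1 * A 1"
        by (simp add: A_def sum.distrib sum_distrib_left)
      also have "\<dots> = W * W" using V0 V1 by (simp add: power2_eq_square W_def field_simps)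
      finally show ?thesis by (simp add: power2_eq_square)
    qed
    have allC: "(\<forall>a\<in>arms. \<forall>i\<in>{1..J}. w a i \<ge> 0) \<and> Rf J \<beta> \<sigma> ws w \<le> W^2" if w: "w \<in> C_agnostic J \<alpha>" for w
    proof -
      obtain u where u: "u 0 \<ge> 0" "u 1 \<ge> 0" "u 0 + u 1 = 1" "\<forall>a\<in>arms. \<forall>i\<in>{1..J}. w a i = \<alpha> i * u a"
        using w by (auto simp: C_agnostic_def)
      have wu0: "w 0 i = \<alpha> i * u 0" and wu1: "w 1 i = \<alpha> i * u 1" if "i \<in> {1..J}" for i
        using u(4) that by (auto simp: arms_def)
      have wnn: "\<forall>a\<in>arms. \<forall>i\<in>{1..J}. w a i \<ge> 0"
      proof (intro ballI)
        fix a i assume a: "a \<in> arms" and i: "i \<in> {1..J}"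
        have "u a \<ge> 0" using a u by (auto simp: arms_def)
        then show "w a i \<ge> 0" using u(4) a i ap[OF i] by simp
      qed
      have "Rf J \<beta> \<sigma> ws w = (\<Sum>i\<in>{1..J}. W^2 * u 0 / (V 0)^2 * ((\<beta> i)^2 * (\<sigma> 0 i)^2 / \<alpha> i) + W^2 * u 1 / (V 1)^2 * ((\<beta> i)^2 * (\<sigma> 1 i)^2 / \<alpha> i))"
        unfolding Rf_def
      proof (rule sum.cong)
        fix i assume i: "i \<in> {1..J}"
        show "(\<beta> i)^2 * (w 0 i * (\<sigma> 0 i)^2 / (ws 0 i)^2 + w 1 i * (\<sigma> 1 i)^2 / (ws 1 i)^2) = W^2 * u 0 / (V 0)^2 * ((\<beta> i)^2 * (\<sigma> 0 i)^2 / \<alpha> i) + W^2 * u 1 / (V 1)^2 * ((\<beta> i)^2 * (\<sigma> 1 i)^2 / \<alpha> i)"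
          unfolding distrib_left ws_def wu0[OF i] wu1[OF i]
          using h6[of "\<alpha> i" "V 0" W "\<beta> i" "u 0" "\<sigma> 0 i"] h6[of "\<alpha> i" "V 1" W "\<beta> i" "u 1" "\<sigma> 1 i"] ap[OF i] V0 V1 Wp
          by simp
      qed simp
      also have "\<dots> = W^2 * u 0 / (V 0)^2 * A 0 + W^2 * u 1 / (V 1)^2 * A 1"
        by (simp add: A_def sum.distrib sum_distrib_left)
      also have "\<dots> = W^2 * (u 0 + u 1)"
      proof -
        have "W^2 * u 0 / (V 0)^2 * A 0 = W^2 * u 0" using V0 A0 by (simp add: V0(2)[symmetric])
        moreover have "W^2 * u 1 / (V 1)^2 * A 1 = W^2 * u 1" using V1 A1 by (simp add: V1(2)[symmetric])
        ultimately show ?thesis by (simp add: distrib_left)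
      qed
      finally show ?thesis using wnn u(3) by simp
    qed
    have "Tstar J \<beta> \<sigma> (C_agnostic J \<alpha>) \<mu> = 2 * W^2 / (wmean J \<beta> \<mu> 0 - wmean J \<beta> \<mu> 1)^2
      \<and> attained J \<beta> \<sigma> (C_agnostic J \<alpha>) \<mu> ws"
      by (rule main_gen[OF sig mu_L wsC wsnn wsz QQ _ allC]) (use Wp in simp_all)
    then show ?thesis by (simp add: Dsq ws_def)
  qed
  show ?thesis using agn propc active by (simp add: W_def P_def)
qed

end
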